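(* Let $f:[0,\infty)\to[0,\infty)$ be a convex function, let $\nu\in(0,1)$ and $t\in[0,1)\cup(1,\infty)$. Then $$\min\left\{\frac{1-\nu}{\nu},\frac{\nu}{1-\nu}\right\}\mathfrak C_{f,\frac12}(t,1)\le \mathfrak C_{f,\nu}(t,1)\le \max\left\{\frac{1-\nu}{\nu},\frac{\nu}{1-\nu}\right\}\mathfrak C_{f,\frac12}(t,1),$$ where in particular $\mathfrak C_{f,\frac12}(t,1)=\frac{1}{1-t}\int_t^1 f(\lambda)\,d\lambda$.
   Context: For real numbers $x,y$ and $\mu\in[0,1]$, write $x\nabla_\mu y:=(1-\mu)x+\mu y$. For a function $f$ Riemann integrable on the segment between $a$ and $b$, and $\nu\in[0,1]$, define $$\mathfrak C_{f,\nu}(a,b):=(1-\nu)\int_0^1 f\big(a\nabla_{\nu\lambda}b\big)\,d\lambda+\nu\int_0^1 f\big(b\nabla_{(1-\nu)\lambda}a\big)\,d\lambda .$$ *)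

theory Defs
  imports "HOL-Analysis.Analysis"
begin

definition wam :: "real \<Rightarrow> real \<Rightarrow> real \<Rightarrow> real" where
  "wam x mu y = (1 - mu) * x + mu * y"

text \<open>The functional C_{f,nu}(a,b) (integrals taken as Henstock-Kurzweil integrals,
which agree with the Riemann integral for Riemann integrable integrands).\<close>
definition frakC :: "(real \<Rightarrow> real) \<Rightarrow> real \<Rightarrow> real \<Rightarrow> real \<Rightarrow> real" where
  "frakC f nu a b =
     (1 - nu) * integral {0..1} (\<lambda>l. f (wam a (nu * l) b))
     + nu * integral {0..1} (\<lambda>l. f (wam b ((1 - nu) * l) a))"

end

theory Submission
  imports Defs
begin

lemma subst_pos:
  fixes f :: "real \<Rightarrow> real"
  assumes "p < q" "f integrable_on {p..q}"
  shows "integral {0..1} (\<lambda>l. f (p + l*(q-p))) = integral {p..q} f / (q-p)"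
proof -
  have "(f has_integral integral {p..q} f) (cbox p q)" using assms(2) by auto
  from has_integral_affinity'[OF this, of "q-p" p] assms(1)
  have "((\<lambda>x. f ((q-p) * x + p)) has_integral (integral {p..q} f / (q-p))) {0..1}"
    by (simp add: divide_simps)
  then show ?thesis by (simp add: integral_unique algebra_simps)
qed

lemma subst_neg:
  fixes f :: "real \<Rightarrow> real"
  assumes "q < p" "f integrable_on {q..p}"
  shows "integral {0..1} (\<lambda>l. f (p + l*(q-p))) = integral {q..p} f / (p-q)"
proof -
  have i: "(\<lambda>x. f (-x)) integrable_on {-p..-q}" using assms(2) by simp
  have "integral {0..1} (\<lambda>l. (\<lambda>x. f (-x)) (-p + l*(-q - -p))) = integral {-p..-q} (\<lambda>x. f (-x)) / (-q - -p)"
    by (rule subst_pos) (use assms i in auto)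
  then show ?thesis by (simp add: algebra_simps)
qed

lemma conv_int:
  fixes f :: "real \<Rightarrow> real"
  assumes cv: "convex_on {0..} f" and nn: "\<And>x. x \<ge> 0 \<Longrightarrow> f x \<ge> 0" and "0 \<le> a" "a \<le> b"
  shows "f integrable_on {a..b}"
proof -
  have "f integrable_on {0..b}"
  proof (cases "b = 0")
    case True then show ?thesis using integrable_on_refl[of f "0::real"] by simp
  next
    case False
    with assms have b: "b > 0" by simp
    have cont: "continuous_on {0<..} f"
      by (rule convex_on_continuous) (auto intro: convex_on_subset[OF cv])
    have cvb: "convex_on {0..b} f" by (rule convex_on_subset[OF cv]) auto
    define M where "M = max (f 0) (f b)"
    have bd: "\<bar>f x\<bar> \<le> M" if "x \<in> {0<..b}" for x
      using convex_on_le_max[OF cvb, of x] nn[of x] that unfolding M_def by auto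
    have meas: "f \<in> borel_measurable (lebesgue_on {0<..b})"
      by (rule continuous_imp_measurable_on_sets_lebesgue) (auto intro: continuous_on_subset[OF cont])
    have neg: "negligible (({0<..b} - {0..b}) \<union> ({0..b} - {0<..b::real}))"
    proof -
      have "({0<..b} - {0..b}) \<union> ({0..b} - {0<..b::real}) = {0}" using b by auto
      then show ?thesis by simp
    qed
    have "(\<lambda>x. M) integrable_on {0<..b}"
      using integrable_spike_set_eq[OF neg] by auto
    then have "f integrable_on {0<..b}"
      by (intro measurable_bounded_by_integrable_imp_integrable_real[OF meas _ bd]) auto
    then show ?thesis using integrable_spike_set_eq[OF neg] by auto
  qed
  then show ?thesis by (rule integrable_on_subinterval) (use assms in auto)
qed

lemma alg: fixes X Y D nu :: real assumes "D \<noteq> 0" "nu \<noteq> 0" "nu \<noteq> 1"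
  shows "(1-nu) * (X/(nu*D)) + nu*(Y/((1-nu)*D)) = ((1-nu)/nu*X + nu/(1-nu)*Y)/D"
proof -
  have "1 - nu \<noteq> 0" using assms by simp
  then show ?thesis using assms by (simp add: divide_simps)
qed

lemma main_lt:
  fixes f :: "real \<Rightarrow> real"
  assumes cv: "convex_on {0..} f" and nn: "\<And>x. x \<ge> 0 \<Longrightarrow> f x \<ge> 0"
    and nu: "0 < nu" "nu < 1" and t: "0 \<le> t" "t < 1"
  shows "\<exists>I1 I2. I1 \<ge> 0 \<and> I2 \<ge> 0 \<and> I1 + I2 = integral {t..1} f \<and>
     frakC f nu t 1 = ((1-nu)/nu * I1 + nu/(1-nu) * I2) / (1-t)"
proof -
  define m where "m = (1-nu)*t + nu"
  have "0 < (1-nu)*(1-t)" using nu t by simp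
  then have tm: "t < m" "m < 1" using nu t unfolding m_def by (auto simp: algebra_simps)
  have "m - t = nu*(1-t)" "1 - m = (1-nu)*(1-t)" unfolding m_def by algebra+
  have e1: "(\<lambda>l. f (wam t (nu * l) 1)) = (\<lambda>l. f (t + l*(m-t)))"
    unfolding wam_def m_def by (auto simp: algebra_simps)
  have e2: "(\<lambda>l. f (wam 1 ((1-nu) * l) t)) = (\<lambda>l. f (1 + l*(m-1)))"
    unfolding wam_def m_def by (auto simp: algebra_simps)
  have i1: "f integrable_on {t..m}" by (rule conv_int[OF cv nn]) (use t tm in auto)
  have i2: "f integrable_on {m..1}" by (rule conv_int[OF cv nn]) (use t tm in auto)
  have i3: "f integrable_on {t..1}" by (rule conv_int[OF cv nn]) (use t tm in auto)
  have s1: "integral {0..1} (\<lambda>l. f (t + l*(m-t))) = integral {t..m} f / (m-t)"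
    by (rule subst_pos[OF tm(1) i1])
  have s2: "integral {0..1} (\<lambda>l. f (1 + l*(m-1))) = integral {m..1} f / (1-m)"
    by (rule subst_neg[OF tm(2) i2])
  show ?thesis
  proof (intro exI conjI)
    show "integral {t..m} f \<ge> 0" by (rule integral_nonneg[OF i1]) (use nn t in auto)
    show "integral {m..1} f \<ge> 0" by (rule integral_nonneg[OF i2]) (use nn t tm in auto)
    show "integral {t..m} f + integral {m..1} f = integral {t..1} f"
      using Henstock_Kurzweil_Integration.integral_combine[of t m 1 f] tm i3 by auto
    show "frakC f nu t 1 = ((1-nu)/nu * integral {t..m} f + nu/(1-nu) * integral {m..1} f) / (1-t)"
    proof -
      have "frakC f nu t 1 = (1-nu) * (integral {t..m} f / (m-t)) + nu * (integral {m..1} f / (1-m))"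
        unfolding frakC_def e1 e2 s1 s2 by simp
      also have "\<dots> = ((1-nu)/nu * integral {t..m} f + nu/(1-nu) * integral {m..1} f) / (1-t)"
        unfolding \<open>m - t = _\<close> \<open>1 - m = _\<close> using nu t by (intro alg) auto
      finally show ?thesis .
    qed
  qed
qed

lemma main_gt:
  fixes f :: "real \<Rightarrow> real"
  assumes cv: "convex_on {0..} f" and nn: "\<And>x. x \<ge> 0 \<Longrightarrow> f x \<ge> 0"
    and nu: "0 < nu" "nu < 1" and t: "1 < t"
  shows "\<exists>I1 I2. I1 \<ge> 0 \<and> I2 \<ge> 0 \<and> I1 + I2 = integral {1..t} f \<and>
     frakC f nu t 1 = ((1-nu)/nu * I1 + nu/(1-nu) * I2) / (t-1)"
proof -
  define m where "m = (1-nu)*t + nu"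
  have "0 < (1-nu)*(t-1)" using nu t by simp
  then have tm: "m < t" "1 < m" using nu t unfolding m_def by (auto simp: algebra_simps)
  have "t - m = nu*(t-1)" "m - 1 = (1-nu)*(t-1)" unfolding m_def by algebra+
  have e1: "(\<lambda>l. f (wam t (nu * l) 1)) = (\<lambda>l. f (t + l*(m-t)))"
    unfolding wam_def m_def by (auto simp: algebra_simps)
  have e2: "(\<lambda>l. f (wam 1 ((1-nu) * l) t)) = (\<lambda>l. f (1 + l*(m-1)))"
    unfolding wam_def m_def by (auto simp: algebra_simps)
  have i1: "f integrable_on {m..t}" by (rule conv_int[OF cv nn]) (use t tm in auto)
  have i2: "f integrable_on {1..m}" by (rule conv_int[OF cv nn]) (use t tm in auto)
  have i3: "f integrable_on {1..t}" by (rule conv_int[OF cv nn]) (use t tm in auto)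
  have s1: "integral {0..1} (\<lambda>l. f (t + l*(m-t))) = integral {m..t} f / (t-m)"
    by (rule subst_neg[OF tm(1) i1])
  have s2: "integral {0..1} (\<lambda>l. f (1 + l*(m-1))) = integral {1..m} f / (m-1)"
    by (rule subst_pos[OF tm(2) i2])
  show ?thesis
  proof (intro exI conjI)
    show "integral {m..t} f \<ge> 0" by (rule integral_nonneg[OF i1]) (use nn t tm in auto)
    show "integral {1..m} f \<ge> 0" by (rule integral_nonneg[OF i2]) (use nn t tm in auto)
    show "integral {m..t} f + integral {1..m} f = integral {1..t} f"
      using Henstock_Kurzweil_Integration.integral_combine[of 1 m t f] tm i3 by auto
    show "frakC f nu t 1 = ((1-nu)/nu * integral {m..t} f + nu/(1-nu) * integral {1..m} f) / (t-1)"
    proof -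
      have "frakC f nu t 1 = (1-nu) * (integral {m..t} f / (t-m)) + nu * (integral {1..m} f / (m-1))"
        unfolding frakC_def e1 e2 s1 s2 by simp
      also have "\<dots> = ((1-nu)/nu * integral {m..t} f + nu/(1-nu) * integral {1..m} f) / (t-1)"
        unfolding \<open>t - m = _\<close> \<open>m - 1 = _\<close> using nu t by (intro alg) auto
      finally show ?thesis .
    qed
  qed
qed

lemma ineq:
  fixes nu A B D :: real
  assumes "0 < nu" "nu < 1" "A \<ge> 0" "B \<ge> 0" "D > 0"
  shows "min ((1 - nu) / nu) (nu / (1 - nu)) * ((A+B)/D) \<le> ((1-nu)/nu * A + nu/(1-nu) * B) / D
    \<and> ((1-nu)/nu * A + nu/(1-nu) * B) / D \<le> max ((1 - nu) / nu) (nu / (1 - nu)) * ((A+B)/D)"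
proof -
  let ?x = "(1-nu)/nu" and ?y = "nu/(1-nu)"
  have "min ?x ?y * A \<le> ?x * A" "min ?x ?y * B \<le> ?y * B"
    "?x * A \<le> max ?x ?y * A" "?y * B \<le> max ?x ?y * B"
    by (rule mult_right_mono; use assms in simp)+
  then have "min ?x ?y * (A+B) \<le> ?x * A + ?y * B" "?x * A + ?y * B \<le> max ?x ?y * (A+B)"
    by (simp_all add: algebra_simps)
  then show ?thesis using assms by (simp add: divide_right_mono)
qed

theorem theorem2p3:
  fixes f :: "real \<Rightarrow> real" and nu t :: real
  assumes "convex_on {0..} f"
    and "\<And>x. x \<ge> 0 \<Longrightarrow> f x \<ge> 0"
    and "0 < nu" and "nu < 1"
    and "0 \<le> t" and "t \<noteq> 1"
  shows "min ((1 - nu) / nu) (nu / (1 - nu)) * frakC f (1/2) t 1 \<le> frakC f nu t 1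
       \<and> frakC f nu t 1 \<le> max ((1 - nu) / nu) (nu / (1 - nu)) * frakC f (1/2) t 1
       \<and> frakC f (1/2) t 1 =
           (if t < 1 then integral {t..1} f / (1 - t) else integral {1..t} f / (t - 1))"
proof (cases "t < 1")
  case True
  obtain A B where AB: "A \<ge> 0" "B \<ge> 0" "A + B = integral {t..1} f"
    "frakC f nu t 1 = ((1-nu)/nu * A + nu/(1-nu) * B) / (1-t)"
    using main_lt[OF assms(1,2,3,4,5) True] by blast
  obtain A' B' where AB': "A' + B' = integral {t..1} f"
    "frakC f (1/2) t 1 = ((1-1/2)/(1/2) * A' + (1/2)/(1-1/2) * B') / (1-t)"
    using main_lt[OF assms(1,2) _ _ assms(5) True, of "1/2"] by auto
  have h: "frakC f (1/2) t 1 = (A+B)/(1-t)" using AB' AB(3) by simp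
  show ?thesis using ineq[OF assms(3,4) AB(1,2), of "1-t"] True unfolding h AB(4)
    by (simp add: AB(3))
next
  case False
  then have T: "1 < t" using assms(6) by auto
  obtain A B where AB: "A \<ge> 0" "B \<ge> 0" "A + B = integral {1..t} f"
    "frakC f nu t 1 = ((1-nu)/nu * A + nu/(1-nu) * B) / (t-1)"
    using main_gt[OF assms(1,2,3,4) T] by blast
  obtain A' B' where AB': "A' + B' = integral {1..t} f"
    "frakC f (1/2) t 1 = ((1-1/2)/(1/2) * A' + (1/2)/(1-1/2) * B') / (t-1)"
    using main_gt[OF assms(1,2) _ _ T, of "1/2"] by auto
  have h: "frakC f (1/2) t 1 = (A+B)/(t-1)" using AB' AB(3) by simp
  show ?thesis using ineq[OF assms(3,4) AB(1,2), of "t-1"] T False unfolding h AB(4)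
    by (simp add: AB(3))
qed

end
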